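(* If $\Delta;\Gamma\vdash M:A$ and $\Delta\vdash M\triangleright^*N$ in DCC, then $M^\circ\triangleright^*N^\circ$ in CC.
   Context: DCC: expressions $x\mid U_i\mid\Pi x{:}A.B\mid L@M\mid\ell_i\{\overline M\}$; label contexts $\Delta::=\cdot\mid\Delta,\ell_i(\{\overline x{:}\overline A\},x{:}A\mapsto L:B)$; substitution with $\ell\{\overline M\}[N/x]=\ell\{\overline{M[N/x]}\}$; reduction $\Delta\vdash\ell\{\overline M\}@N\triangleright L[\overline M/\overline x,N/x]$ when $\ell(\{\overline x{:}\overline A\},x{:}A\mapsto L:B)\in\Delta$, $\triangleright^*$ zero or more steps; typing $\Delta;\Gamma\vdash M:A$ by CC-style rules for variables, $U_i:U_{i+1}$, $\Pi$, application $M@N:B[N/x]$, conversion, plus: if $\Delta;\Gamma$ well formed, $\ell(\{\overline x{:}\overline A\},x{:}A\mapsto M:B)\in\Delta$, $|\overline M|=|\overline x|$, $\Delta;\Gamma\vdash M_k:A_k[M_1/x_1,\dots,M_{k-1}/x_{k-1}]$ for all $k$, then $\Delta;\Gamma\vdash\ell\{\overline M\}:\Pi x{:}A[\overline M/\overline x].B[\overline M/\overline x]$. CC: expressions $x\mid U_i\mid\Pi x{:}A.B\mid L\,M\mid\lambda x{:}A.M$, reduction $(\lambda x{:}A.N)\,M\triangleright N[M/x]$. Backward transformation (relative to $\Delta$, on well-typed terms): $x^\circ=x$, $U_i^\circ=U_i$, $(\Pi x{:}A.B)^\circ=\Pi x{:}A^\circ.B^\circ$, $(M@N)^\circ=M^\circ\,N^\circ$,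 $(\ell\{\overline M\})^\circ=\lambda x{:}A^\circ[\overline{M^\circ}/\overline x].\,L^\circ[\overline{M^\circ}/\overline x]$ where $\ell(\{\overline x{:}\overline A\},x{:}A\mapsto L:B)\in\Delta$. *)

theory Defs
  imports Main
begin

(* Variables are de Bruijn indices; labels are named by natural numbers
   (label \<ell>_i is DLab i). *)
datatype dtm =
    DVar nat
  | DU nat
  | DPi dtm dtm            (* \<Pi>x:A.B, B under one binder *)
  | DApp dtm dtm
  | DLab nat "dtm list"

primrec dlift :: "nat \<Rightarrow> dtm \<Rightarrow> dtm" where
  "dlift k (DVar i) = DVar (if i < k then i else Suc i)"
| "dlift k (DU n) = DU n"
| "dlift k (DPi A B) = DPi (dlift k A) (dlift (Suc k) B)"
| "dlift k (DApp M N) = DApp (dlift k M) (dlift k N)"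
| "dlift k (DLab l Ms) = DLab l (map (dlift k) Ms)"

definition dup :: "(nat \<Rightarrow> dtm) \<Rightarrow> nat \<Rightarrow> dtm" where
  "dup \<sigma> i = (case i of 0 \<Rightarrow> DVar 0 | Suc j \<Rightarrow> dlift 0 (\<sigma> j))"

primrec dsub :: "(nat \<Rightarrow> dtm) \<Rightarrow> dtm \<Rightarrow> dtm" where
  "dsub \<sigma> (DVar i) = \<sigma> i"
| "dsub \<sigma> (DU n) = DU n"
| "dsub \<sigma> (DPi A B) = DPi (dsub \<sigma> A) (dsub (dup \<sigma>) B)"
| "dsub \<sigma> (DApp M N) = DApp (dsub \<sigma> M) (dsub \<sigma> N)"
| "dsub \<sigma> (DLab l Ms) = DLab l (map (dsub \<sigma>) Ms)"

(* substitution of the list ts for the innermost length ts variables: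
   Var 0 := ts!0, ..., Var (n-1) := ts!(n-1), other variables shifted down *)
definition dinstf :: "dtm list \<Rightarrow> nat \<Rightarrow> dtm" where
  "dinstf ts i = (if i < length ts then ts ! i else DVar (i - length ts))"

definition dinst :: "dtm list \<Rightarrow> dtm \<Rightarrow> dtm" where
  "dinst ts = dsub (dinstf ts)"

definition dsubst1 :: "dtm \<Rightarrow> dtm \<Rightarrow> dtm" where
  "dsubst1 N B = dinst [N] B"

(* Label definitions \<ell>({x_1:A_1,...,x_k:A_k}, x:A \<mapsto> L : B).
   Telescope As = [A_1,...,A_k]; A_j lives under x_1..x_{j-1};
   A under x_1..x_k; L and B under x_1..x_k,x.  With de Bruijn indices,
   in L and B: Var 0 = x, Var 1 = x_k, ..., Var k = x_1. *)
type_synonym ldef = "dtm list \<times> dtm \<times> dtm \<times> dtm"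

(* label contexts: head = most recently added label *)
type_synonym lctx = "(nat \<times> ldef) list"

(* typing contexts: head = most recently bound variable *)
type_synonym tctx = "dtm list"

fun lookup :: "lctx \<Rightarrow> nat \<Rightarrow> (ldef \<times> lctx) option" where
  "lookup [] l = None"
| "lookup ((l', d) # \<Delta>) l = (if l = l' then Some (d, \<Delta>) else lookup \<Delta> l)"

fun dliftn :: "nat \<Rightarrow> dtm \<Rightarrow> dtm" where
  "dliftn 0 t = t"
| "dliftn (Suc n) t = dlift 0 (dliftn n t)"

inductive dstep :: "lctx \<Rightarrow> dtm \<Rightarrow> dtm \<Rightarrow> bool" where
  dbeta: "\<lbrakk>lookup \<Delta> l = Some ((As, A, L, B), \<Delta>'); length Ms = length As\<rbrakk>
          \<Longrightarrow> dstep \<Delta> (DApp (DLab l Ms) N) (dinst (N # rev Ms) L)"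
| dpi1: "dstep \<Delta> A A' \<Longrightarrow> dstep \<Delta> (DPi A B) (DPi A' B)"
| dpi2: "dstep \<Delta> B B' \<Longrightarrow> dstep \<Delta> (DPi A B) (DPi A B')"
| dapp1: "dstep \<Delta> M M' \<Longrightarrow> dstep \<Delta> (DApp M N) (DApp M' N)"
| dapp2: "dstep \<Delta> N N' \<Longrightarrow> dstep \<Delta> (DApp M N) (DApp M N')"
| dlab: "\<lbrakk>i < length Ms; dstep \<Delta> (Ms ! i) M'\<rbrakk>
          \<Longrightarrow> dstep \<Delta> (DLab l Ms) (DLab l (Ms[i := M']))"

abbreviation dsteps :: "lctx \<Rightarrow> dtm \<Rightarrow> dtm \<Rightarrow> bool" where
  "dsteps \<Delta> \<equiv> (dstep \<Delta>)\<^sup>*\<^sup>*"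

definition dconv :: "lctx \<Rightarrow> dtm \<Rightarrow> dtm \<Rightarrow> bool" where
  "dconv \<Delta> = (\<lambda>A B. dstep \<Delta> A B \<or> dstep \<Delta> B A)\<^sup>*\<^sup>*"

inductive wfL :: "lctx \<Rightarrow> bool"
  and wfC :: "lctx \<Rightarrow> tctx \<Rightarrow> bool"
  and dtyp :: "lctx \<Rightarrow> tctx \<Rightarrow> dtm \<Rightarrow> dtm \<Rightarrow> bool" where
  wfL_nil: "wfL []"
| wfL_cons: "\<lbrakk>wfL \<Delta>; lookup \<Delta> l = None; dtyp \<Delta> (A # rev As) L B\<rbrakk>
             \<Longrightarrow> wfL ((l, (As, A, L, B)) # \<Delta>)"
| wfC_nil: "wfL \<Delta> \<Longrightarrow> wfC \<Delta> []"
| wfC_cons: "dtyp \<Delta> \<Gamma> A (DU i) \<Longrightarrow> wfC \<Delta> (A # \<Gamma>)"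
| t_var: "\<lbrakk>wfC \<Delta> \<Gamma>; i < length \<Gamma>\<rbrakk> \<Longrightarrow> dtyp \<Delta> \<Gamma> (DVar i) (dliftn (Suc i) (\<Gamma> ! i))"
| t_univ: "wfC \<Delta> \<Gamma> \<Longrightarrow> dtyp \<Delta> \<Gamma> (DU i) (DU (Suc i))"
| t_pi: "\<lbrakk>dtyp \<Delta> \<Gamma> A (DU i); dtyp \<Delta> (A # \<Gamma>) B (DU j)\<rbrakk>
         \<Longrightarrow> dtyp \<Delta> \<Gamma> (DPi A B) (DU (max i j))"
| t_app: "\<lbrakk>dtyp \<Delta> \<Gamma> M (DPi A B); dtyp \<Delta> \<Gamma> N A\<rbrakk>
          \<Longrightarrow> dtyp \<Delta> \<Gamma> (DApp M N) (dsubst1 N B)"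
| t_conv: "\<lbrakk>dtyp \<Delta> \<Gamma> M A; dtyp \<Delta> \<Gamma> B (DU i); dconv \<Delta> A B\<rbrakk>
           \<Longrightarrow> dtyp \<Delta> \<Gamma> M B"
| t_lab: "\<lbrakk>wfC \<Delta> \<Gamma>; lookup \<Delta> l = Some ((As, A, L, B), \<Delta>');
           length Ms = length As;
           \<forall>k < length As. dtyp \<Delta> \<Gamma> (Ms ! k) (dinst (rev (take k Ms)) (As ! k))\<rbrakk>
          \<Longrightarrow> dtyp \<Delta> \<Gamma> (DLab l Ms)
                (DPi (dinst (rev Ms) A) (dsub (dup (dinstf (rev Ms))) B))"

datatype ctm =
    CVar nat
  | CU nat
  | CPi ctm ctm
  | CApp ctm ctm
  | CLam ctm ctm           (* \<lambda>x:A.M, M under one binder *)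

primrec clift :: "nat \<Rightarrow> ctm \<Rightarrow> ctm" where
  "clift k (CVar i) = CVar (if i < k then i else Suc i)"
| "clift k (CU n) = CU n"
| "clift k (CPi A B) = CPi (clift k A) (clift (Suc k) B)"
| "clift k (CApp M N) = CApp (clift k M) (clift k N)"
| "clift k (CLam A M) = CLam (clift k A) (clift (Suc k) M)"

definition cup :: "(nat \<Rightarrow> ctm) \<Rightarrow> nat \<Rightarrow> ctm" where
  "cup \<sigma> i = (case i of 0 \<Rightarrow> CVar 0 | Suc j \<Rightarrow> clift 0 (\<sigma> j))"

primrec csub :: "(nat \<Rightarrow> ctm) \<Rightarrow> ctm \<Rightarrow> ctm" where
  "csub \<sigma> (CVar i) = \<sigma> i"
| "csub \<sigma> (CU n) = CU n"
| "csub \<sigma> (CPi A B) = CPi (csub \<sigma> A) (csub (cup \<sigma>) B)"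
| "csub \<sigma> (CApp M N) = CApp (csub \<sigma> M) (csub \<sigma> N)"
| "csub \<sigma> (CLam A M) = CLam (csub \<sigma> A) (csub (cup \<sigma>) M)"

definition cinstf :: "ctm list \<Rightarrow> nat \<Rightarrow> ctm" where
  "cinstf ts i = (if i < length ts then ts ! i else CVar (i - length ts))"

definition cinst :: "ctm list \<Rightarrow> ctm \<Rightarrow> ctm" where
  "cinst ts = csub (cinstf ts)"

inductive cstep :: "ctm \<Rightarrow> ctm \<Rightarrow> bool" where
  cbeta: "cstep (CApp (CLam A N) M) (cinst [M] N)"
| cpi1: "cstep A A' \<Longrightarrow> cstep (CPi A B) (CPi A' B)"
| cpi2: "cstep B B' \<Longrightarrow> cstep (CPi A B) (CPi A B')"
| capp1: "cstep M M' \<Longrightarrow> cstep (CApp M N) (CApp M' N)"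
| capp2: "cstep N N' \<Longrightarrow> cstep (CApp M N) (CApp M N')"
| clam1: "cstep A A' \<Longrightarrow> cstep (CLam A M) (CLam A' M)"
| clam2: "cstep M M' \<Longrightarrow> cstep (CLam A M) (CLam A M')"

abbreviation csteps :: "ctm \<Rightarrow> ctm \<Rightarrow> bool" where
  "csteps \<equiv> cstep\<^sup>*\<^sup>*"

lemma lookup_shorter: "lookup \<Delta> l = Some (d, \<Delta>') \<Longrightarrow> length \<Delta>' < length \<Delta>"
  by (induction \<Delta> l rule: lookup.induct) (auto split: if_splits)

(* The bodies A, L of a label are translated relative to the label context in
   which the label was defined (the part of \<Delta> preceding it); for well-formed
   \<Delta> this is the same as translating them relative to \<Delta>.  Unknown labels
   (impossible for well-typed terms) are mapped to an arbitrary term. *)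
function bt :: "lctx \<Rightarrow> dtm \<Rightarrow> ctm" where
  "bt \<Delta> (DVar i) = CVar i"
| "bt \<Delta> (DU i) = CU i"
| "bt \<Delta> (DPi A B) = CPi (bt \<Delta> A) (bt \<Delta> B)"
| "bt \<Delta> (DApp M N) = CApp (bt \<Delta> M) (bt \<Delta> N)"
| "bt \<Delta> (DLab l Ms) =
     (case lookup \<Delta> l of
        None \<Rightarrow> CU 0
      | Some ((As, A, L, B), \<Delta>') \<Rightarrow>
          (let ts = rev (map (bt \<Delta>) Ms)
           in CLam (cinst ts (bt \<Delta>' A)) (csub (cup (cinstf ts)) (bt \<Delta>' L))))"
  by pat_completeness auto
termination
  apply (relation "measures [\<lambda>(\<Delta>, t). length \<Delta>, \<lambda>(\<Delta>, t). size t]")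
  apply (auto dest: lookup_shorter simp: size_list_estimation' less_Suc_eq_le)
  done

end

theory Submission imports Defs begin

definition upr :: "(nat \<Rightarrow> nat) \<Rightarrow> nat \<Rightarrow> nat" where
  "upr r i = (case i of 0 \<Rightarrow> 0 | Suc j \<Rightarrow> Suc (r j))"

primrec crn :: "(nat \<Rightarrow> nat) \<Rightarrow> ctm \<Rightarrow> ctm" where
  "crn r (CVar i) = CVar (r i)"
| "crn r (CU n) = CU n"
| "crn r (CPi A B) = CPi (crn r A) (crn (upr r) B)"
| "crn r (CApp M N) = CApp (crn r M) (crn r N)"
| "crn r (CLam A M) = CLam (crn r A) (crn (upr r) M)"

primrec cclo :: "nat \<Rightarrow> ctm \<Rightarrow> bool" where
  "cclo n (CVar i) = (i < n)"
| "cclo n (CU m) = True"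
| "cclo n (CPi A B) = (cclo n A \<and> cclo (Suc n) B)"
| "cclo n (CApp M N) = (cclo n M \<and> cclo n N)"
| "cclo n (CLam A M) = (cclo n A \<and> cclo (Suc n) M)"

lemma clift_crn: "clift k t = crn (\<lambda>i. if i < k then i else Suc i) t"
proof (induction t arbitrary: k)
  case (CPi A B)
  have "upr (\<lambda>i. if i < k then i else Suc i) = (\<lambda>i. if i < Suc k then i else Suc i)"
    by (auto simp: upr_def split: nat.splits)
  then show ?case using CPi by simp
next
  case (CLam A B)
  have "upr (\<lambda>i. if i < k then i else Suc i) = (\<lambda>i. if i < Suc k then i else Suc i)"
    by (auto simp: upr_def split: nat.splits)
  then show ?case using CLam by simp
qed auto

lemma clift0: "clift 0 t = crn Suc t"
  by (simp add: clift_crn)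

lemma cup_var: "cup (\<lambda>i. CVar (r i)) = (\<lambda>i. CVar (upr r i))"
  by (auto simp: cup_def upr_def split: nat.splits)

lemma crn_csub_var: "crn r t = csub (\<lambda>i. CVar (r i)) t"
  by (induction t arbitrary: r) (auto simp: cup_var)

lemma csub_crn: "csub \<sigma> (crn r t) = csub (\<lambda>i. \<sigma> (r i)) t"
proof (induction t arbitrary: \<sigma> r)
  case (CPi A B)
  have "(\<lambda>i. cup \<sigma> (upr r i)) = cup (\<lambda>i. \<sigma> (r i))"
    by (auto simp: cup_def upr_def split: nat.splits)
  then show ?case using CPi by simp
next
  case (CLam A B)
  have "(\<lambda>i. cup \<sigma> (upr r i)) = cup (\<lambda>i. \<sigma> (r i))"
    by (auto simp: cup_def upr_def split: nat.splits)
  then show ?case using CLam by simp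
qed auto

lemma crn_crn: "crn r (crn s t) = crn (\<lambda>i. r (s i)) t"
  by (simp only: crn_csub_var[of r] crn_csub_var[of "\<lambda>i. r (s i)"] csub_crn)

lemma crn_csub: "crn r (csub \<sigma> t) = csub (\<lambda>i. crn r (\<sigma> i)) t"
proof (induction t arbitrary: \<sigma> r)
  case (CPi A B)
  have "(\<lambda>i. crn (upr r) (cup \<sigma> i)) = cup (\<lambda>i. crn r (\<sigma> i))"
    by (auto simp: cup_def upr_def clift0 crn_crn split: nat.splits)
  then show ?case using CPi by simp
next
  case (CLam A B)
  have "(\<lambda>i. crn (upr r) (cup \<sigma> i)) = cup (\<lambda>i. crn r (\<sigma> i))"
    by (auto simp: cup_def upr_def clift0 crn_crn split: nat.splits)
  then show ?case using CLam by simp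
qed auto

lemma csub_cup_clift: "csub (cup \<sigma>) (clift 0 u) = clift 0 (csub \<sigma> u)"
  by (simp add: clift0 csub_crn crn_csub cup_def)

lemma csub_csub: "csub \<sigma> (csub \<tau> t) = csub (\<lambda>i. csub \<sigma> (\<tau> i)) t"
proof (induction t arbitrary: \<sigma> \<tau>)
  case (CPi A B)
  have "(\<lambda>i. csub (cup \<sigma>) (cup \<tau> i)) = cup (\<lambda>i. csub \<sigma> (\<tau> i))"
    by (auto simp: cup_def csub_cup_clift split: nat.splits)
  then show ?case using CPi by simp
next
  case (CLam A B)
  have "(\<lambda>i. csub (cup \<sigma>) (cup \<tau> i)) = cup (\<lambda>i. csub \<sigma> (\<tau> i))"
    by (auto simp: cup_def csub_cup_clift split: nat.splits)
  then show ?case using CLam by simp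
qed auto

lemma cup_CVar: "cup CVar = CVar"
  by (auto simp: cup_def split: nat.splits)

lemma csub_id: "csub CVar t = t"
  by (induction t) (auto simp: cup_CVar)

lemma clift_csub: "clift k t = csub (\<lambda>i. CVar (if i < k then i else Suc i)) t"
  by (simp add: clift_crn crn_csub_var)

lemma cup_clift_fun: "cup (\<lambda>i. CVar (if i < k then i else Suc i)) = (\<lambda>i. CVar (if i < Suc k then i else Suc i))"
  by (auto simp: cup_def split: nat.splits)

lemma csub_cong: "cclo n t \<Longrightarrow> (\<forall>i<n. \<sigma> i = \<tau> i) \<Longrightarrow> csub \<sigma> t = csub \<tau> t"
proof (induction t arbitrary: n \<sigma> \<tau>)
  case (CPi A B)
  have "\<forall>i<Suc n. cup \<sigma> i = cup \<tau> i" using CPi.prems by (auto simp: cup_def split: nat.splits)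
  then show ?case using CPi by auto
next
  case (CLam A B)
  have "\<forall>i<Suc n. cup \<sigma> i = cup \<tau> i" using CLam.prems by (auto simp: cup_def split: nat.splits)
  then show ?case using CLam by auto
qed auto

lemma cclo_crn: "cclo n t \<Longrightarrow> (\<forall>i<n. r i < m) \<Longrightarrow> cclo m (crn r t)"
proof (induction t arbitrary: n m r)
  case (CPi A B)
  have "\<forall>i<Suc n. upr r i < Suc m" using CPi.prems by (auto simp: upr_def split: nat.splits)
  then show ?case using CPi by auto
next
  case (CLam A B)
  have "\<forall>i<Suc n. upr r i < Suc m" using CLam.prems by (auto simp: upr_def split: nat.splits)
  then show ?case using CLam by auto
qed auto

lemma cclo_clift0: "cclo n t \<Longrightarrow> cclo (Suc n) (clift 0 t)"
  by (simp add: clift0 cclo_crn)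

lemma cclo_csub: "cclo m t \<Longrightarrow> (\<forall>i<m. cclo n (\<sigma> i)) \<Longrightarrow> cclo n (csub \<sigma> t)"
proof (induction t arbitrary: m n \<sigma>)
  case (CPi A B)
  have "\<forall>i<Suc m. cclo (Suc n) (cup \<sigma> i)" using CPi.prems
    by (auto simp: cup_def cclo_clift0 split: nat.splits)
  then show ?case using CPi by auto
next
  case (CLam A B)
  have "\<forall>i<Suc m. cclo (Suc n) (cup \<sigma> i)" using CLam.prems
    by (auto simp: cup_def cclo_clift0 split: nat.splits)
  then show ?case using CLam by auto
qed auto

lemma csub_inst_A: "cclo n t \<Longrightarrow> length ts = n \<Longrightarrow>
  csub \<sigma> (csub (cinstf ts) t) = csub (cinstf (map (csub \<sigma>) ts)) t"
  unfolding csub_csub by (rule csub_cong) (auto simp: cinstf_def)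

lemma csub_inst_L: "cclo (Suc n) t \<Longrightarrow> length ts = n \<Longrightarrow>
  csub (cup \<sigma>) (csub (cup (cinstf ts)) t) = csub (cup (cinstf (map (csub \<sigma>) ts))) t"
  unfolding csub_csub by (rule csub_cong) (auto simp: cinstf_def cup_def csub_cup_clift split: nat.splits)

lemma cinst_comp: "cinst [n] (csub (cup (cinstf ts)) t) = csub (cinstf (n # ts)) t"
proof -
  have "(\<lambda>i. csub (cinstf [n]) (cup (cinstf ts) i)) = cinstf (n # ts)"
  proof
    fix i show "csub (cinstf [n]) (cup (cinstf ts) i) = cinstf (n # ts) i"
      by (cases i) (auto simp: cup_def clift0 csub_crn cinstf_def csub_id[unfolded fun_eq_iff])
  qed
  then show ?thesis by (simp add: cinst_def csub_csub)
qed


fun dlok :: "lctx \<Rightarrow> dtm \<Rightarrow> bool" where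
  "dlok \<Delta> (DVar i) = True"
| "dlok \<Delta> (DU i) = True"
| "dlok \<Delta> (DPi A B) = (dlok \<Delta> A \<and> dlok \<Delta> B)"
| "dlok \<Delta> (DApp M N) = (dlok \<Delta> M \<and> dlok \<Delta> N)"
| "dlok \<Delta> (DLab l Ms) = ((case lookup \<Delta> l of None \<Rightarrow> False | Some (d, \<Delta>') \<Rightarrow> length Ms = length (fst d))
     \<and> (\<forall>x\<in>set Ms. dlok \<Delta> x))"

fun dclo :: "nat \<Rightarrow> dtm \<Rightarrow> bool" where
  "dclo n (DVar i) = (i < n)"
| "dclo n (DU i) = True"
| "dclo n (DPi A B) = (dclo n A \<and> dclo (Suc n) B)"
| "dclo n (DApp M N) = (dclo n M \<and> dclo n N)"
| "dclo n (DLab l Ms) = (\<forall>x\<in>set Ms. dclo n x)"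

lemma typ_props:
  shows "wfL \<Delta> \<Longrightarrow> True"
    and "wfC \<Delta> \<Gamma> \<Longrightarrow> wfL \<Delta>"
    and "dtyp \<Delta> \<Gamma> M T \<Longrightarrow> wfL \<Delta> \<and> wfC \<Delta> \<Gamma> \<and> dclo (length \<Gamma>) M \<and> dlok \<Delta> M"
proof (induction rule: wfL_wfC_dtyp.inducts)
  case (t_lab \<Delta> \<Gamma> l As A L B \<Delta>' Ms)
  have "\<forall>x\<in>set Ms. dclo (length \<Gamma>) x \<and> dlok \<Delta> x"
    using t_lab by (auto simp: in_set_conv_nth)
  then show ?case using t_lab by auto
qed auto

lemma wfL_lookup:
  "wfL \<Delta> \<Longrightarrow> lookup \<Delta> l = Some ((As, A, L, B), \<Delta>') \<Longrightarrow>
   wfL \<Delta>' \<and> dclo (length As) A \<and> dclo (Suc (length As)) L \<and> dlok \<Delta>' A \<and> dlok \<Delta>' L \<and>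
   (\<forall>l' x. lookup \<Delta>' l' = Some x \<longrightarrow> lookup \<Delta> l' = Some x)"
proof (induction \<Delta> arbitrary: l)
  case Nil
  then show ?case by simp
next
  case (Cons p \<Delta>0)
  obtain l0 d0 where p: "p = (l0, d0)" by (cases p)
  obtain As0 A0 L0 B0 where d0: "d0 = (As0, A0, L0, B0)" by (cases d0) auto
  from Cons.prems(1) have w0: "wfL \<Delta>0" and f0: "lookup \<Delta>0 l0 = None"
    and ty: "dtyp \<Delta>0 (A0 # rev As0) L0 B0"
    unfolding p d0 by (auto elim: wfL.cases)
  show ?case
  proof (cases "l = l0")
    case True
    with Cons.prems(2) have eq: "As = As0" "A = A0" "L = L0" "\<Delta>' = \<Delta>0" by (auto simp: p d0)
    from typ_props(3)[OF ty] have "wfC \<Delta>0 (A0 # rev As0)" "dclo (Suc (length As0)) L0" "dlok \<Delta>0 L0"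
      by auto
    from this(1) obtain i where "dtyp \<Delta>0 (rev As0) A0 (DU i)" by (auto elim: wfC.cases)
    from typ_props(3)[OF this] have "dclo (length As0) A0" "dlok \<Delta>0 A0" by auto
    moreover have "\<forall>l' x. lookup \<Delta>0 l' = Some x \<longrightarrow> lookup (p # \<Delta>0) l' = Some x"
      using f0 by (auto simp: p)
    ultimately show ?thesis using eq w0 \<open>dclo (Suc (length As0)) L0\<close> \<open>dlok \<Delta>0 L0\<close> by auto
  next
    case False
    with Cons.prems(2) have lk: "lookup \<Delta>0 l = Some ((As, A, L, B), \<Delta>')" by (simp add: p)
    from Cons.IH[OF w0 lk] have ih: "wfL \<Delta>' \<and> dclo (length As) A \<and> dclo (Suc (length As)) L \<and> dlok \<Delta>' A \<and> dlok \<Delta>' L \<and>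
   (\<forall>l' x. lookup \<Delta>' l' = Some x \<longrightarrow> lookup \<Delta>0 l' = Some x)" .
    have "\<forall>l' x. lookup \<Delta>' l' = Some x \<longrightarrow> lookup (p # \<Delta>0) l' = Some x"
      using ih f0 by (auto simp: p)
    then show ?thesis using ih by blast
  qed
qed

lemma dlok_mono: "(\<forall>l x. lookup \<Delta>1 l = Some x \<longrightarrow> lookup \<Delta>2 l = Some x) \<Longrightarrow> dlok \<Delta>1 t \<Longrightarrow> dlok \<Delta>2 t"
  by (induction t) (auto split: option.splits)

lemma bt_mono: "(\<forall>l x. lookup \<Delta>1 l = Some x \<longrightarrow> lookup \<Delta>2 l = Some x) \<Longrightarrow> dlok \<Delta>1 t \<Longrightarrow> bt \<Delta>2 t = bt \<Delta>1 t"
proof (induction t)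
  case (DLab l Ms)
  then obtain x where lk: "lookup \<Delta>1 l = Some x" by (auto split: option.splits)
  have m: "map (bt \<Delta>2) Ms = map (bt \<Delta>1) Ms" using DLab by auto
  have "lookup \<Delta>2 l = Some x" using lk DLab.prems(1) by blast
  with lk show ?case by (simp add: m)
qed auto

lemma dlok_dlift: "dlok \<Delta> (dlift k t) = dlok \<Delta> t"
  by (induction t arbitrary: k) (auto split: option.splits)

lemma dlok_dsub: "dlok \<Delta> t \<Longrightarrow> (\<forall>i. dlok \<Delta> (\<sigma> i)) \<Longrightarrow> dlok \<Delta> (dsub \<sigma> t)"
proof (induction t arbitrary: \<sigma>)
  case (DPi A B)
  have "\<forall>i. dlok \<Delta> (dup \<sigma> i)" using DPi.prems by (auto simp: dup_def dlok_dlift split: nat.splits)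
  then show ?case using DPi by auto
qed (auto split: option.splits)

lemma cinstf_clo: "(\<forall>x\<in>set ts. cclo n x) \<Longrightarrow> i < length ts \<Longrightarrow> cclo n (cinstf ts i)"
  by (auto simp: cinstf_def)

lemma cup_cinstf_clo: "(\<forall>x\<in>set ts. cclo n x) \<Longrightarrow> i < Suc (length ts) \<Longrightarrow> cclo (Suc n) (cup (cinstf ts) i)"
  by (auto simp: cinstf_def cup_def cclo_clift0 split: nat.splits)

lemma bt_clo: "wfL \<Delta> \<Longrightarrow> dlok \<Delta> t \<Longrightarrow> dclo n t \<Longrightarrow> cclo n (bt \<Delta> t)"
proof (induction \<Delta> t arbitrary: n rule: bt.induct)
  case (5 \<Delta> l Ms)
  from "5.prems"(2) obtain As A L B \<Delta>' where lk: "lookup \<Delta> l = Some ((As, A, L, B), \<Delta>')"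
    and len: "length Ms = length As"
    by (auto split: option.splits)
  note ihM = "5.IH"(1)[OF lk refl refl refl refl]
  note ihA = "5.IH"(2)[OF lk refl refl refl refl refl]
  note ihL = "5.IH"(3)[OF lk refl refl refl refl refl]
  note wl = wfL_lookup[OF "5.prems"(1) lk]
  define ts where "ts = rev (map (bt \<Delta>) Ms)"
  have tsc: "\<forall>x\<in>set ts. cclo n x" using ihM "5.prems" by (auto simp: ts_def)
  have lts: "length ts = length As" by (simp add: ts_def len)
  have cA: "cclo (length As) (bt \<Delta>' A)" using ihA wl by auto
  have cL: "cclo (Suc (length As)) (bt \<Delta>' L)" using ihL wl by auto
  have "cclo n (cinst ts (bt \<Delta>' A))" unfolding cinst_def
    by (rule cclo_csub[OF cA]) (simp add: cinstf_clo[OF tsc] lts[symmetric])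
  moreover have "cclo (Suc n) (csub (cup (cinstf ts)) (bt \<Delta>' L))"
    by (rule cclo_csub[OF cL]) (simp add: cup_cinstf_clo[OF tsc] lts[symmetric])
  ultimately show ?case using lk by (simp add: ts_def[symmetric] Let_def)
qed auto


lemma bt_lab_csub:
  assumes w: "wfL \<Delta>" and lk: "lookup \<Delta> l = Some ((As, A, L, B), \<Delta>')"
    and len: "length Ms = length As"
    and mp: "map (bt \<Delta>) Ms' = map (csub \<tau>) (map (bt \<Delta>) Ms)"
  shows "bt \<Delta> (DLab l Ms') = csub \<tau> (bt \<Delta> (DLab l Ms))"
proof -
  note wl = wfL_lookup[OF w lk]
  have cA: "cclo (length As) (bt \<Delta>' A)" using bt_clo wl by blast
  have cL: "cclo (Suc (length As)) (bt \<Delta>' L)" using bt_clo wl by blast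
  define ts where "ts = rev (map (bt \<Delta>) Ms)"
  have lts: "length ts = length As" by (simp add: ts_def len)
  have e1: "rev (map (bt \<Delta>) Ms') = map (csub \<tau>) ts" by (simp add: ts_def mp rev_map)
  have "bt \<Delta> (DLab l Ms') = CLam (cinst (map (csub \<tau>) ts) (bt \<Delta>' A))
         (csub (cup (cinstf (map (csub \<tau>) ts))) (bt \<Delta>' L))"
    using lk by (simp add: Let_def e1)
  also have "\<dots> = CLam (csub \<tau> (cinst ts (bt \<Delta>' A))) (csub (cup \<tau>) (csub (cup (cinstf ts)) (bt \<Delta>' L)))"
    by (simp add: cinst_def csub_inst_A[OF cA lts] csub_inst_L[OF cL lts])
  also have "\<dots> = csub \<tau> (bt \<Delta> (DLab l Ms))"
    using lk by (simp add: ts_def Let_def)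
  finally show ?thesis .
qed

lemma bt_lift: "wfL \<Delta> \<Longrightarrow> dlok \<Delta> t \<Longrightarrow> bt \<Delta> (dlift k t) = clift k (bt \<Delta> t)"
proof (induction t arbitrary: k)
  case (DPi A B)
  then show ?case by simp
next
  case (DLab l Ms)
  from DLab.prems(2) obtain As A L B \<Delta>' where lk: "lookup \<Delta> l = Some ((As, A, L, B), \<Delta>')"
    and len: "length Ms = length As"
    by (auto split: option.splits)
  have "map (bt \<Delta>) (map (dlift k) Ms) = map (csub (\<lambda>i. CVar (if i < k then i else Suc i))) (map (bt \<Delta>) Ms)"
    using DLab by (simp add: clift_csub)
  from bt_lab_csub[OF DLab.prems(1) lk len this] show ?case by (simp add: clift_csub)
qed auto

lemma bt_dup: "wfL \<Delta> \<Longrightarrow> (\<forall>i. dlok \<Delta> (\<sigma> i)) \<Longrightarrow> (\<lambda>i. bt \<Delta> (dup \<sigma> i)) = cup (\<lambda>i. bt \<Delta> (\<sigma> i))"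
  by (auto simp: dup_def cup_def bt_lift split: nat.splits)

lemma bt_sub: "wfL \<Delta> \<Longrightarrow> dlok \<Delta> t \<Longrightarrow> (\<forall>i. dlok \<Delta> (\<sigma> i)) \<Longrightarrow>
  bt \<Delta> (dsub \<sigma> t) = csub (\<lambda>i. bt \<Delta> (\<sigma> i)) (bt \<Delta> t)"
proof (induction t arbitrary: \<sigma>)
  case (DPi A B)
  have "\<forall>i. dlok \<Delta> (dup \<sigma> i)" using DPi.prems by (auto simp: dup_def dlok_dlift split: nat.splits)
  then show ?case using DPi by (simp add: bt_dup)
next
  case (DLab l Ms)
  from DLab.prems(2) obtain As A L B \<Delta>' where lk: "lookup \<Delta> l = Some ((As, A, L, B), \<Delta>')"
    and len: "length Ms = length As"
    by (auto split: option.splits)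
  have "map (bt \<Delta>) (map (dsub \<sigma>) Ms) = map (csub (\<lambda>i. bt \<Delta> (\<sigma> i))) (map (bt \<Delta>) Ms)"
    using DLab by simp
  from bt_lab_csub[OF DLab.prems(1) lk len this] show ?case by simp
qed auto


lemma cstep_crn: "cstep a b \<Longrightarrow> cstep (crn r a) (crn r b)"
proof (induction arbitrary: r rule: cstep.induct)
  case (cbeta A N M)
  have "(\<lambda>i. crn r (cinstf [M] i)) = (\<lambda>i. cinstf [crn r M] (upr r i))"
    by (auto simp: cinstf_def upr_def split: nat.splits)
  then have "crn r (cinst [M] N) = cinst [crn r M] (crn (upr r) N)"
    by (simp add: cinst_def crn_csub csub_crn)
  then show ?case by (simp add: cstep.cbeta)
qed (auto intro: cstep.intros)

lemma csteps_clift0: "csteps a b \<Longrightarrow> csteps (clift 0 a) (clift 0 b)"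
  by (induction rule: rtranclp_induct) (auto simp: clift0 intro: rtranclp.rtrancl_into_rtrancl cstep_crn)

lemma csteps_CPi: "csteps A A' \<Longrightarrow> csteps B B' \<Longrightarrow> csteps (CPi A B) (CPi A' B')"
proof -
  assume a: "csteps A A'" and b: "csteps B B'"
  from a have "csteps (CPi A B) (CPi A' B)"
    by (induction rule: rtranclp_induct) (auto intro: rtranclp.rtrancl_into_rtrancl cpi1)
  moreover from b have "csteps (CPi A' B) (CPi A' B')"
    by (induction rule: rtranclp_induct) (auto intro: rtranclp.rtrancl_into_rtrancl cpi2)
  ultimately show ?thesis by simp
qed

lemma csteps_CApp: "csteps A A' \<Longrightarrow> csteps B B' \<Longrightarrow> csteps (CApp A B) (CApp A' B')"
proof -
  assume a: "csteps A A'" and b: "csteps B B'"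
  from a have "csteps (CApp A B) (CApp A' B)"
    by (induction rule: rtranclp_induct) (auto intro: rtranclp.rtrancl_into_rtrancl capp1)
  moreover from b have "csteps (CApp A' B) (CApp A' B')"
    by (induction rule: rtranclp_induct) (auto intro: rtranclp.rtrancl_into_rtrancl capp2)
  ultimately show ?thesis by simp
qed

lemma csteps_CLam: "csteps A A' \<Longrightarrow> csteps B B' \<Longrightarrow> csteps (CLam A B) (CLam A' B')"
proof -
  assume a: "csteps A A'" and b: "csteps B B'"
  from a have "csteps (CLam A B) (CLam A' B)"
    by (induction rule: rtranclp_induct) (auto intro: rtranclp.rtrancl_into_rtrancl clam1)
  moreover from b have "csteps (CLam A' B) (CLam A' B')"
    by (induction rule: rtranclp_induct) (auto intro: rtranclp.rtrancl_into_rtrancl clam2)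
  ultimately show ?thesis by simp
qed

lemma cup_steps: "(\<forall>i. csteps (\<sigma> i) (\<tau> i)) \<Longrightarrow> csteps (cup \<sigma> j) (cup \<tau> j)"
  by (auto simp: cup_def csteps_clift0 split: nat.splits)

lemma csub_steps: "(\<forall>i. csteps (\<sigma> i) (\<tau> i)) \<Longrightarrow> csteps (csub \<sigma> t) (csub \<tau> t)"
proof (induction t arbitrary: \<sigma> \<tau>)
  case (CPi A B)
  then show ?case using cup_steps[OF CPi.prems] by (simp add: csteps_CPi)
next
  case (CApp A B)
  then show ?case by (simp add: csteps_CApp)
next
  case (CLam A B)
  then show ?case using cup_steps[OF CLam.prems] by (simp add: csteps_CLam)
qed auto

lemma cinstf_steps: "list_all2 csteps ts ts' \<Longrightarrow> csteps (cinstf ts j) (cinstf ts' j)"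
  by (auto simp: cinstf_def list_all2_lengthD list_all2_nthD)

lemma step_bt: "dstep \<Delta> M N \<Longrightarrow> wfL \<Delta> \<Longrightarrow> dlok \<Delta> M \<Longrightarrow> csteps (bt \<Delta> M) (bt \<Delta> N) \<and> dlok \<Delta> N"
proof (induction rule: dstep.induct)
  case (dbeta \<Delta> l As A L B \<Delta>' Ms N)
  note wl = wfL_lookup[OF dbeta.prems(1) dbeta.hyps(1)]
  have dN: "dlok \<Delta> N" and dMs: "\<forall>x\<in>set Ms. dlok \<Delta> x" using dbeta.prems by auto
  have ds: "\<forall>i. dlok \<Delta> (dinstf (N # rev Ms) i)"
    using dN dMs by (auto simp: dinstf_def nth_Cons split: nat.splits; metis length_rev nth_mem set_rev)
  have dL: "dlok \<Delta> L" using dlok_mono wl by blast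
  have btL: "bt \<Delta> L = bt \<Delta>' L" using bt_mono wl by blast
  define ts where "ts = rev (map (bt \<Delta>) Ms)"
  have fe: "(\<lambda>i. bt \<Delta> (dinstf (N # rev Ms) i)) = cinstf (bt \<Delta> N # ts)"
  proof
    fix i
    have e: "bt \<Delta> N # ts = map (bt \<Delta>) (N # rev Ms)" by (simp add: ts_def rev_map)
    show "bt \<Delta> (dinstf (N # rev Ms) i) = cinstf (bt \<Delta> N # ts) i"
      unfolding e by (simp add: dinstf_def cinstf_def nth_Cons split: nat.splits)
  qed
  have "bt \<Delta> (dinst (N # rev Ms) L) = cinst [bt \<Delta> N] (csub (cup (cinstf ts)) (bt \<Delta>' L))"
    unfolding dinst_def bt_sub[OF dbeta.prems(1) dL ds] fe cinst_comp btL ..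
  moreover have "cstep (bt \<Delta> (DApp (DLab l Ms) N)) (cinst [bt \<Delta> N] (csub (cup (cinstf ts)) (bt \<Delta>' L)))"
    using dbeta.hyps(1) by (simp add: Let_def ts_def cbeta)
  moreover have "dlok \<Delta> (dinst (N # rev Ms) L)"
    unfolding dinst_def by (rule dlok_dsub[OF dL ds])
  ultimately show ?case by auto
next
  case (dlab i Ms \<Delta> M' l)
  have IH: "csteps (bt \<Delta> (Ms ! i)) (bt \<Delta> M') \<and> dlok \<Delta> M'"
    using dlab.IH dlab.prems dlab.hyps(1) by auto
  have dl: "dlok \<Delta> (DLab l (Ms[i := M']))"
    using dlab.prems(2) IH by (auto split: option.splits dest: set_update_subset_insert[THEN subsetD])
  have la: "list_all2 csteps (map (bt \<Delta>) Ms) (map (bt \<Delta>) (Ms[i := M']))"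
    using IH dlab.hyps(1) by (auto intro!: list_all2_all_nthI simp: nth_list_update)
  then have la': "list_all2 csteps (rev (map (bt \<Delta>) Ms)) (rev (map (bt \<Delta>) (Ms[i := M'])))"
    by simp
  have c1: "\<forall>j. csteps (cinstf (rev (map (bt \<Delta>) Ms)) j) (cinstf (rev (map (bt \<Delta>) (Ms[i := M']))) j)"
    using cinstf_steps[OF la'] by blast
  have "csteps (bt \<Delta> (DLab l Ms)) (bt \<Delta> (DLab l (Ms[i := M'])))"
  proof (cases "lookup \<Delta> l")
    case None
    then show ?thesis by simp
  next
    case (Some a)
    obtain As A L B \<Delta>' where "a = ((As, A, L, B), \<Delta>')" by (cases a) auto
    then show ?thesis using Some
      by (simp add: Let_def cinst_def csteps_CLam csub_steps[OF c1] csub_steps[OF cup_steps[OF c1, THEN allI]])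
  qed
  then show ?case using dl by blast
qed (auto simp: csteps_CPi csteps_CApp)

theorem lemma3p20:
  assumes "dtyp \<Delta> \<Gamma> M A"
    and "dsteps \<Delta> M N"
  shows "csteps (bt \<Delta> M) (bt \<Delta> N)"
proof -
  from typ_props(3)[OF assms(1)] have w: "wfL \<Delta>" and d: "dlok \<Delta> M" by auto
  from assms(2) have "csteps (bt \<Delta> M) (bt \<Delta> N) \<and> dlok \<Delta> N"
  proof (induction rule: rtranclp_induct)
    case base
    then show ?case using d by simp
  next
    case (step y z)
    then show ?case using step_bt[OF step.hyps(2) w] by (auto intro: rtranclp_trans)
  qed
  then show ?thesis by blast
qed

end
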